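(* Let $G$ be a split graph with vertex partition $\{X,Y\}$, where $X=\{v_1,\ldots,v_n\}$ is a maximal clique of $G$ and $Y=V(G)\setminus X$ is a stable set, and write $d_i=|N_G(v_i)\cap Y|$, with $d_1\ge\cdots\ge d_n$ and $d_{\lfloor n/2\rfloor}\ge 1$. If $n\ge 3$, then $G$ admits a decomposition into locally irregular subgraphs and $\chi'_{\rm irr}(G)\le 2$.
   Context: All graphs are finite and simple. A graph is locally irregular if any two adjacent vertices have distinct degrees. A locally irregular decomposition of $G$ is a collection of locally irregular subgraphs whose edge sets partition $E(G)$; for a graph admitting one, $\chi'_{\rm irr}(G)$ is the minimum number of subgraphs in such a decomposition. *)

theory Defs
  imports Main
begin

definition graph :: "'a set \<Rightarrow> 'a set set \<Rightarrow> bool" where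
  "graph V E \<longleftrightarrow> finite V \<and> (\<forall>e\<in>E. e \<subseteq> V \<and> card e = 2)"

definition adj :: "'a set set \<Rightarrow> 'a \<Rightarrow> 'a \<Rightarrow> bool" where
  "adj E u v \<longleftrightarrow> {u, v} \<in> E"

definition nbhd :: "'a set set \<Rightarrow> 'a \<Rightarrow> 'a set" where
  "nbhd E v = {u. adj E v u}"

definition deg :: "'a set set \<Rightarrow> 'a \<Rightarrow> nat" where
  "deg F v = card {e \<in> F. v \<in> e}"

definition locally_irregular :: "'a set set \<Rightarrow> bool" where
  "locally_irregular F \<longleftrightarrow> (\<forall>u v. {u, v} \<in> F \<longrightarrow> deg F u \<noteq> deg F v)"

definition li_decomposition :: "'a set set \<Rightarrow> nat \<Rightarrow> (nat \<Rightarrow> 'a set set) \<Rightarrow> bool" where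
  "li_decomposition E k P \<longleftrightarrow>
     (\<Union>i<k. P i) = E \<and>
     (\<forall>i<k. \<forall>j<k. i \<noteq> j \<longrightarrow> P i \<inter> P j = {}) \<and>
     (\<forall>i<k. locally_irregular (P i))"

definition decomposable :: "'a set set \<Rightarrow> bool" where
  "decomposable E \<longleftrightarrow> (\<exists>k P. li_decomposition E k P)"

definition chi_irr :: "'a set set \<Rightarrow> nat" where
  "chi_irr E = (LEAST k. \<exists>P. li_decomposition E k P)"

definition clique :: "'a set set \<Rightarrow> 'a set \<Rightarrow> bool" where
  "clique E X \<longleftrightarrow> (\<forall>u\<in>X. \<forall>v\<in>X. u \<noteq> v \<longrightarrow> adj E u v)"

definition maximal_clique :: "'a set \<Rightarrow> 'a set set \<Rightarrow> 'a set \<Rightarrow> bool" where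
  "maximal_clique V E X \<longleftrightarrow> X \<subseteq> V \<and> clique E X \<and>
     (\<forall>Z. X \<subset> Z \<and> Z \<subseteq> V \<longrightarrow> \<not> clique E Z)"

definition stable :: "'a set set \<Rightarrow> 'a set \<Rightarrow> bool" where
  "stable E Y \<longleftrightarrow> (\<forall>u\<in>Y. \<forall>v\<in>Y. \<not> adj E u v)"

end

theory Submission
  imports Defs
begin

lemma deg_alt:
  assumes "F \<subseteq> E" "graph V E"
  shows "deg F x = card {u. {x,u} \<in> F}"
proof -
  have "bij_betw (\<lambda>u. {x,u}) {u. {x,u} \<in> F} {e \<in> F. x \<in> e}"
  proof (rule bij_betwI')
    show "\<And>a b. a \<in> {u. {x, u} \<in> F} \<Longrightarrow> b \<in> {u. {x, u} \<in> F} \<Longrightarrow> ({x, a} = {x, b}) = (a = b)"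
      by (auto simp: doubleton_eq_iff)
    show "\<And>a. a \<in> {u. {x, u} \<in> F} \<Longrightarrow> {x, a} \<in> {e \<in> F. x \<in> e}" by auto
    fix e assume e: "e \<in> {e \<in> F. x \<in> e}"
    then have "card e = 2" using assms unfolding graph_def by auto
    then obtain a b where ab: "e = {a,b}" "a \<noteq> b" by (auto simp: card_2_iff)
    show "\<exists>u\<in>{u. {x, u} \<in> F}. e = {x, u}"
    proof (cases "x = a")
      case True then show ?thesis using e ab by auto
    next
      case False then have "x = b" using e ab by auto
      then show ?thesis using e ab by (auto simp: insert_commute)
    qed
  qed
  then show ?thesis unfolding deg_def by (simp add: bij_betw_same_card)
qed

lemma arith_red:
  fixes p q s h n A B ea eb :: nat
  assumes "p \<noteq> q" "1 \<le> p" "1 \<le> q" "p + q \<le> s" "h = s div 2"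
    and "p < q \<Longrightarrow> q \<le> h \<Longrightarrow> eb \<le> ea"
    and "q < p \<Longrightarrow> p \<le> h \<Longrightarrow> ea \<le> eb"
    and "odd s \<Longrightarrow> p = h \<Longrightarrow> ea \<ge> 1"
    and "odd s \<Longrightarrow> q = h \<Longrightarrow> eb \<ge> 1"
    and "A + p + (if p \<le> h then 1 else 0) = s + (if p \<le> h then ea else 0)"
    and "B + q + (if q \<le> h then 1 else 0) = s + (if q \<le> h then eb else 0)"
  shows "A \<noteq> B"
proof -
  have hs: "s = 2*h \<or> s = 2*h+1" using assms(5) by presburger
  have oddh: "s = 2*h+1 \<Longrightarrow> odd s" by presburger
  show ?thesis
  proof (cases "p < q")
    case True
    then have ph: "p \<le> h" using assms(4) hs by linarith
    show ?thesis
    proof (cases "q \<le> h")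
      case True then show ?thesis using assms(6) \<open>p<q\<close> ph assms(10,11) by auto
    next
      case False
      show ?thesis
      proof (cases "q = p + 1")
        case True
        then have "p = h" "s = 2*h+1" using False ph hs assms(4) by linarith+
        then show ?thesis using assms(8) oddh assms(10,11) False ph by auto
      next
        case False2: False
        then show ?thesis using False ph assms(10,11) \<open>p<q\<close> by auto
      qed
    qed
  next
    case False
    then have qp: "q < p" using assms(1) by auto
    then have ph: "q \<le> h" using assms(4) hs by linarith
    show ?thesis
    proof (cases "p \<le> h")
      case True then show ?thesis using assms(7) qp ph assms(10,11) by auto
    next
      case False
      show ?thesis
      proof (cases "p = q + 1")
        case True
        then have "q = h" "s = 2*h+1" using False ph hs assms(4) by linarith+
        then show ?thesis using assms(9) oddh assms(10,11) False ph by auto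
      next
        case False2: False
        then show ?thesis using False ph assms(10,11) qp by auto
      qed
    qed
  qed
qed

lemma arith_blue:
  fixes p q s h n A B ea eb :: nat
  assumes "p \<noteq> q" "p + q > s" "h = s div 2"
    and "h < p \<Longrightarrow> p < q \<Longrightarrow> ea \<le> eb"
    and "h < q \<Longrightarrow> q < p \<Longrightarrow> eb \<le> ea"
    and "even s \<Longrightarrow> p = h + 1 \<Longrightarrow> ea \<ge> 1"
    and "even s \<Longrightarrow> q = h + 1 \<Longrightarrow> eb \<ge> 1"
    and "A + s + (if p > h then 1 else 0) = n + p + (if p > h then ea else 0)"
    and "B + s + (if q > h then 1 else 0) = n + q + (if q > h then eb else 0)"
  shows "A \<noteq> B"
proof -
  have hs: "s = 2*h \<or> s = 2*h+1" using assms(3) by presburger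
  have evh: "s = 2*h \<Longrightarrow> even s" by presburger
  show ?thesis
  proof (cases "p < q")
    case True
    then have qh: "q > h" using assms(2) hs by linarith
    show ?thesis
    proof (cases "p > h")
      case True then show ?thesis using assms(4) \<open>p<q\<close> qh assms(8,9) by auto
    next
      case False
      show ?thesis
      proof (cases "q = p + 1")
        case True
        then have "p = h" "s = 2*h" using False qh hs assms(2) by linarith+
        then show ?thesis using assms(7) evh assms(8,9) False qh True by auto
      next
        case False2: False
        then show ?thesis using False qh assms(8,9) \<open>p<q\<close> by auto
      qed
    qed
  next
    case False
    then have qp: "q < p" using assms(1) by auto
    then have ph: "p > h" using assms(2) hs by linarith
    show ?thesis
    proof (cases "q > h")
      case True then show ?thesis using assms(5) qp ph assms(8,9) by auto
    next
      case False
      show ?thesis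
      proof (cases "p = q + 1")
        case True
        then have "q = h" "s = 2*h" using False ph hs assms(2) by linarith+
        then show ?thesis using assms(6) evh assms(8,9) False ph True by auto
      next
        case False2: False
        then show ?thesis using False ph assms(8,9) qp by auto
      qed
    qed
  qed
qed

lemma card_Q:
  fixes p s n :: nat
  assumes "1 \<le> p" "p \<le> n" "s \<le> n + 1" "n \<le> s"
  shows "card {q \<in> {1..n}. q \<noteq> p \<and> p + q \<le> s} + p + (if 2*p \<le> s then 1 else 0) = s"
proof -
  have "{q \<in> {1..n}. q \<noteq> p \<and> p + q \<le> s} = {1..s-p} - {p}" using assms by (auto simp: atLeastAtMost_iff)
  moreover have "card ({1..s-p} - {p}) = (s - p) - (if p \<le> s - p then 1 else 0)"
    using assms by (simp add: card_Diff_singleton_if)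
  moreover have "(p \<le> s - p) = (2*p \<le> s)" using assms by linarith
  moreover have "p \<le> s" using assms by linarith
  ultimately show ?thesis using assms(1) by (simp split: if_splits)
qed

locale colconf =
  fixes V :: "'a set" and E :: "'a set set" and X Y :: "'a set"
    and \<sigma> :: "nat \<Rightarrow> 'a" and n s h :: nat and e :: "nat \<Rightarrow> nat"
  assumes G: "graph V E" and XV: "X \<subseteq> V" and cl: "clique E X" and Ydef: "Y = V - X"
    and st: "stable E Y" and bij: "bij_betw \<sigma> {1..n} X" and n3: "n \<ge> 3"
    and sn: "s = n \<or> s = n + 1" and hdef: "h = s div 2"
    and edef: "\<And>p. e p = card (nbhd E (\<sigma> p) \<inter> Y)"
    and mono1: "\<And>p q. 1 \<le> p \<Longrightarrow> p \<le> q \<Longrightarrow> q \<le> h \<Longrightarrow> e q \<le> e p"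
    and mono2: "\<And>p q. h < p \<Longrightarrow> p \<le> q \<Longrightarrow> q \<le> n \<Longrightarrow> e p \<le> e q"
    and codd: "odd s \<Longrightarrow> e h \<ge> 1 \<and> \<not> (e (h+1) = 1 \<and> (\<exists>y\<in>Y. \<sigma> ` {h+1..n} \<subseteq> nbhd E y))"
    and ceven: "even s \<Longrightarrow> e (h+1) \<ge> 1 \<and> \<not> (e h = 1 \<and> (\<exists>y\<in>Y. \<sigma> ` {1..h} \<subseteq> nbhd E y))"
begin

definition pos :: "'a \<Rightarrow> nat" where "pos = the_inv_into {1..n} \<sigma>"

definition col :: "'a \<Rightarrow> 'a \<Rightarrow> bool" where
  "col a b \<longleftrightarrow> (a \<in> X \<and> b \<in> X \<and> pos a + pos b \<le> s) \<or> (a \<in> X \<and> b \<notin> X \<and> pos a \<le> h)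
     \<or> (a \<notin> X \<and> b \<in> X \<and> pos b \<le> h)"

definition R :: "'a set set" where "R = {f \<in> E. \<exists>a b. f = {a,b} \<and> col a b}"

lemma col_sym: "col a b = col b a" unfolding col_def by auto

lemma R_iff: "{a,b} \<in> R \<longleftrightarrow> {a,b} \<in> E \<and> col a b"
proof
  assume "{a,b} \<in> R"
  then obtain a' b' where "{a,b} \<in> E" "{a,b} = {a',b'}" "col a' b'" unfolding R_def by blast
  then show "{a,b} \<in> E \<and> col a b" using col_sym by (auto simp: doubleton_eq_iff insert_commute)
next
  assume "{a,b} \<in> E \<and> col a b" then show "{a,b} \<in> R" unfolding R_def by blast
qed

lemma finV: "finite V" using G unfolding graph_def by auto

lemma edge: "{a,b} \<in> E \<Longrightarrow> a \<in> V \<and> b \<in> V \<and> a \<noteq> b"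
proof -
  assume a: "{a,b} \<in> E"
  then have "{a,b} \<subseteq> V" "card {a,b} = 2" using G unfolding graph_def by auto
  moreover have "a \<noteq> b" proof assume "a = b" then show False using \<open>card {a,b} = 2\<close> by simp qed
  ultimately show ?thesis by auto
qed

lemma nbhd_sub: "nbhd E x \<subseteq> V" using edge unfolding nbhd_def adj_def by auto

lemma fin_nbhd: "finite (nbhd E x)" using nbhd_sub finV finite_subset by blast

lemma edge_notYY: "{a,b} \<in> E \<Longrightarrow> a \<in> Y \<Longrightarrow> b \<in> Y \<Longrightarrow> False"
  using st unfolding stable_def adj_def by auto

lemma sig_in: "p \<in> {1..n} \<Longrightarrow> \<sigma> p \<in> X" using bij bij_betwE by blast
lemma pos_sig: "p \<in> {1..n} \<Longrightarrow> pos (\<sigma> p) = p"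
  unfolding pos_def using bij by (simp add: bij_betw_def the_inv_into_f_f)
lemma sig_pos: "x \<in> X \<Longrightarrow> \<sigma> (pos x) = x"
  unfolding pos_def using bij by (simp add: bij_betw_def f_the_inv_into_f)
lemma pos_in: "x \<in> X \<Longrightarrow> pos x \<in> {1..n}"
  unfolding pos_def using bij by (metis bij_betw_def the_inv_into_into order_refl)
lemma sig_inj: "inj_on \<sigma> {1..n}" using bij bij_betw_def by blast

lemma cardX: "card X = n" using bij bij_betw_same_card by fastforce

lemma self_nbhd: "x \<notin> nbhd E x"
proof
  assume "x \<in> nbhd E x" then have "{x,x} \<in> E" unfolding nbhd_def adj_def by simp
  then show False using edge by blast
qed

lemma X_nbhd: "x \<in> X \<Longrightarrow> X - {x} \<subseteq> nbhd E x"
  using cl unfolding clique_def nbhd_def by auto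

lemma nbhd_X: assumes "x \<in> X" shows "nbhd E x = (X - {x}) \<union> (nbhd E x \<inter> Y)"
proof -
  have "X - {x} \<subseteq> nbhd E x" using cl assms unfolding clique_def nbhd_def by auto
  moreover have "x \<notin> nbhd E x"
  proof
    assume "x \<in> nbhd E x" then have "{x,x} \<in> E" unfolding nbhd_def adj_def by simp
    then show False using edge by blast
  qed
  ultimately show ?thesis using nbhd_sub Ydef by auto
qed

lemma finX: "finite X" using finV XV finite_subset by blast

lemma card_nbhd: assumes "p \<in> {1..n}" shows "card (nbhd E (\<sigma> p)) + 1 = n + e p"
proof -
  let ?x = "\<sigma> p"
  have x: "?x \<in> X" using sig_in assms .
  have d: "(X - {?x}) \<inter> (nbhd E ?x \<inter> Y) = {}" using Ydef by blast
  have "card ((X - {?x}) \<union> (nbhd E ?x \<inter> Y)) = card (X - {?x}) + card (nbhd E ?x \<inter> Y)"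
    by (rule card_Un_disjoint) (use finX fin_nbhd d in auto)
  then have "card (nbhd E ?x) = card (X - {?x}) + card (nbhd E ?x \<inter> Y)"
    using nbhd_X[OF x] by simp
  moreover have "card (X - {?x}) = n - 1" using cardX x finX by simp
  ultimately show ?thesis using edef n3 by simp
qed

lemma NR_eq: "{u. {a,u} \<in> R} = {u \<in> nbhd E a. col a u}"
  unfolding nbhd_def adj_def using R_iff by auto

lemma NB_eq: "{u. {a,u} \<in> E - R} = {u \<in> nbhd E a. \<not> col a u}"
  unfolding nbhd_def adj_def using R_iff by auto

lemma R_sub: "R \<subseteq> E" unfolding R_def by auto

lemma NR_X:
  assumes p: "p \<in> {1..n}"
  shows "{u \<in> nbhd E (\<sigma> p). col (\<sigma> p) u} =
    \<sigma> ` {q \<in> {1..n}. q \<noteq> p \<and> p + q \<le> s} \<union> (if p \<le> h then nbhd E (\<sigma> p) \<inter> Y else {})"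
proof -
  let ?x = "\<sigma> p"
  have x: "?x \<in> X" using sig_in p .
  have px: "pos ?x = p" using pos_sig p .
  show ?thesis
  proof (intro equalityI subsetI)
    fix u assume u: "u \<in> {u \<in> nbhd E ?x. col ?x u}"
    show "u \<in> \<sigma> ` {q \<in> {1..n}. q \<noteq> p \<and> p + q \<le> s} \<union> (if p \<le> h then nbhd E ?x \<inter> Y else {})"
    proof (cases "u \<in> X")
      case True
      then have "u \<noteq> ?x" using u self_nbhd by auto
      then have "pos u \<noteq> p" using sig_pos True by force
      moreover have "p + pos u \<le> s" using u True x px unfolding col_def by auto
      ultimately have "pos u \<in> {q \<in> {1..n}. q \<noteq> p \<and> p + q \<le> s}" using pos_in True by auto
      then have "u \<in> \<sigma> ` {q \<in> {1..n}. q \<noteq> p \<and> p + q \<le> s}"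
        by (rule image_eqI[where f=\<sigma> and x="pos u", OF sig_pos[OF True, symmetric]])
      then show ?thesis by (rule UnI1)
    next
      case False
      then have "u \<in> Y" "p \<le> h" using u nbhd_sub Ydef x px unfolding col_def by auto
      then show ?thesis using u by auto
    qed
  next
    fix u assume u: "u \<in> \<sigma> ` {q \<in> {1..n}. q \<noteq> p \<and> p + q \<le> s} \<union> (if p \<le> h then nbhd E ?x \<inter> Y else {})"
    show "u \<in> {u \<in> nbhd E ?x. col ?x u}"
    proof (cases "u \<in> nbhd E ?x \<inter> Y \<and> p \<le> h")
      case True
      then show ?thesis using x px Ydef unfolding col_def by auto
    next
      case False
      then obtain q where q: "q \<in> {1..n}" "q \<noteq> p" "p + q \<le> s" "u = \<sigma> q" using u
        by (auto split: if_splits)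
      have "u \<in> X" using sig_in q by auto
      moreover have "u \<noteq> ?x" using q p sig_inj by (metis inj_on_contraD)
      ultimately have "u \<in> nbhd E ?x" using X_nbhd[OF x] by auto
      moreover have "col ?x u" unfolding col_def using x \<open>u \<in> X\<close> px pos_sig q by auto
      ultimately show ?thesis by auto
    qed
  qed
qed

lemma card_NR_X:
  assumes p: "p \<in> {1..n}"
  shows "card {u. {\<sigma> p,u} \<in> R} + p + (if p \<le> h then 1 else 0) = s + (if p \<le> h then e p else 0)"
proof -
  let ?Q = "{q \<in> {1..n}. q \<noteq> p \<and> p + q \<le> s}"
  let ?W = "(if p \<le> h then nbhd E (\<sigma> p) \<inter> Y else {})"
  have sQ: "\<sigma> ` ?Q \<subseteq> X" using sig_in by auto
  have sW: "?W \<subseteq> Y" by auto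
  have d: "\<sigma> ` ?Q \<inter> ?W = {}" using sQ sW Ydef by blast
  have fQ: "finite ?Q" by simp
  have c1: "card (\<sigma> ` ?Q) = card ?Q"
    by (rule card_image) (rule inj_on_subset[OF sig_inj], blast)
  have c2: "card ?W = (if p \<le> h then e p else 0)" using edef by simp
  have fW: "finite ?W" using fin_nbhd by simp
  have "card (\<sigma> ` ?Q \<union> ?W) = card (\<sigma> ` ?Q) + card ?W"
    by (rule card_Un_disjoint[OF finite_imageI[OF fQ] fW d])
  moreover have "{u. {\<sigma> p,u} \<in> R} = \<sigma> ` ?Q \<union> ?W" using NR_eq NR_X[OF p] by simp
  ultimately have "card {u. {\<sigma> p,u} \<in> R} = card ?Q + (if p \<le> h then e p else 0)"
    using c1 c2 by simp
  moreover have "card ?Q + p + (if 2*p \<le> s then 1 else 0) = s"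
    using card_Q[of p n s] p sn by auto
  moreover have "(2*p \<le> s) = (p \<le> h)" using hdef by linarith
  ultimately show ?thesis by simp
qed

lemma card_NB_X:
  assumes p: "p \<in> {1..n}"
  shows "card {u. {\<sigma> p,u} \<in> E - R} + s + (if p > h then 1 else 0) = n + p + (if p > h then e p else 0)"
proof -
  have sub: "{u \<in> nbhd E (\<sigma> p). col (\<sigma> p) u} \<subseteq> nbhd E (\<sigma> p)" by auto
  have "{u. {\<sigma> p,u} \<in> E - R} = nbhd E (\<sigma> p) - {u \<in> nbhd E (\<sigma> p). col (\<sigma> p) u}"
    using NB_eq by auto
  then have "card {u. {\<sigma> p,u} \<in> E - R} = card (nbhd E (\<sigma> p)) - card {u. {\<sigma> p,u} \<in> R}"
    using card_Diff_subset[OF finite_subset[OF sub fin_nbhd] sub] NR_eq by simp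
  moreover have "card {u. {\<sigma> p,u} \<in> R} \<le> card (nbhd E (\<sigma> p))"
    using NR_eq card_mono[OF fin_nbhd sub] by simp
  ultimately show ?thesis using card_nbhd[OF p] card_NR_X[OF p] by (auto split: if_splits)
qed

lemma NR_Y: assumes "y \<in> Y" shows "{u. {y,u} \<in> R} \<subseteq> \<sigma> ` {1..h}"
proof
  fix u assume "u \<in> {u. {y,u} \<in> R}"
  then have u: "{y,u} \<in> E" "col y u" using R_iff by auto
  have "u \<in> X" using u(1) assms edge edge_notYY Ydef by blast
  moreover have "y \<notin> X" using assms Ydef by auto
  ultimately have "pos u \<le> h" using u(2) unfolding col_def by auto
  then have "pos u \<in> {1..h}" using pos_in \<open>u \<in> X\<close> by auto
  then show "u \<in> \<sigma> ` {1..h}"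
    by (rule image_eqI[where f=\<sigma> and x="pos u", OF sig_pos[OF \<open>u \<in> X\<close>, symmetric]])
qed

lemma NB_Y: assumes "y \<in> Y" shows "{u. {y,u} \<in> E - R} \<subseteq> \<sigma> ` {h+1..n}"
proof
  fix u assume "u \<in> {u. {y,u} \<in> E - R}"
  then have u: "{y,u} \<in> E" "\<not> col y u" using R_iff by auto
  have "u \<in> X" using u(1) assms edge edge_notYY Ydef by blast
  moreover have "y \<notin> X" using assms Ydef by auto
  ultimately have "pos u > h" using u(2) unfolding col_def by auto
  then have "pos u \<in> {h+1..n}" using pos_in \<open>u \<in> X\<close> by auto
  then show "u \<in> \<sigma> ` {h+1..n}"
    by (rule image_eqI[where f=\<sigma> and x="pos u", OF sig_pos[OF \<open>u \<in> X\<close>, symmetric]])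
qed


end

context colconf begin

lemma card_img: "A \<subseteq> {1..n} \<Longrightarrow> card (\<sigma> ` A) = card A"
  by (rule card_image) (rule inj_on_subset[OF sig_inj])

lemma e_pos: assumes "p \<in> {1..n}" "y \<in> Y" "{\<sigma> p, y} \<in> E" shows "e p \<ge> 1"
proof -
  have "y \<in> nbhd E (\<sigma> p) \<inter> Y" using assms unfolding nbhd_def adj_def by auto
  then have "nbhd E (\<sigma> p) \<inter> Y \<noteq> {}" by blast
  then have "card (nbhd E (\<sigma> p) \<inter> Y) \<noteq> 0" using fin_nbhd by simp
  then show ?thesis using edef by (simp add: Suc_le_eq)
qed

lemma NR_sub_nbhd: "{u. {y,u} \<in> R} \<subseteq> nbhd E y"
  using NR_eq by auto
lemma NB_sub_nbhd: "{u. {y,u} \<in> E - R} \<subseteq> nbhd E y"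
  using NB_eq by auto

lemma redXY:
  assumes p: "p \<in> {1..n}" "p \<le> h" and y: "y \<in> Y" and E: "{\<sigma> p, y} \<in> E"
  shows "card {u. {\<sigma> p,u} \<in> R} \<noteq> card {u. {y,u} \<in> R}"
proof
  assume eq: "card {u. {\<sigma> p,u} \<in> R} = card {u. {y,u} \<in> R}"
  have e1: "e p \<ge> 1" using e_pos p y E by blast
  have A: "card {u. {\<sigma> p,u} \<in> R} + p + 1 = s + e p" using card_NR_X[OF p(1)] p(2) by simp
  have hn: "h \<le> n" using hdef sn by auto
  have fin: "finite (\<sigma> ` {1..h})" by simp
  have cs: "card (\<sigma> ` {1..h}) = h" using card_img[of "{1..h}"] hn by auto
  have C: "card {u. {y,u} \<in> R} \<le> h" using card_mono[OF fin NR_Y[OF y]] cs by simp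
  have hs: "s = 2*h \<or> s = 2*h+1" using hdef by presburger
  show False
  proof (cases "s = 2*h")
    case False
    then have "s = 2*h+1" using hs by simp
    then show False using A C eq e1 p(2) by linarith
  next
    case True
    then have ev: "even s" by simp
    have "card {u. {y,u} \<in> R} = h" "p = h" "e p = 1" using A C eq e1 p(2) True by linarith+
    then have "{u. {y,u} \<in> R} = \<sigma> ` {1..h}"
      using card_subset_eq[OF fin NR_Y[OF y]] cs by simp
    then have "\<sigma> ` {1..h} \<subseteq> nbhd E y" using NR_sub_nbhd by blast
    then show False using ceven[OF ev] \<open>p = h\<close> \<open>e p = 1\<close> y by blast
  qed
qed

lemma blueXY:
  assumes p: "p \<in> {1..n}" "p > h" and y: "y \<in> Y" and E: "{\<sigma> p, y} \<in> E"
  shows "card {u. {\<sigma> p,u} \<in> E - R} \<noteq> card {u. {y,u} \<in> E - R}"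
proof
  assume eq: "card {u. {\<sigma> p,u} \<in> E - R} = card {u. {y,u} \<in> E - R}"
  have e1: "e p \<ge> 1" using e_pos p y E by blast
  have A: "card {u. {\<sigma> p,u} \<in> E - R} + s + 1 = n + p + e p" using card_NB_X[OF p(1)] p(2) by simp
  have fin: "finite (\<sigma> ` {h+1..n})" by simp
  have cs: "card (\<sigma> ` {h+1..n}) = n - h" using card_img[of "{h+1..n}"] by auto
  have C: "card {u. {y,u} \<in> E - R} \<le> n - h" using card_mono[OF fin NB_Y[OF y]] cs by simp
  have hs: "s = 2*h \<or> s = 2*h+1" using hdef by presburger
  have hn: "h < n" using hdef sn n3 by auto
  show False
  proof (cases "s = 2*h")
    case True
    then show False using A C eq e1 p(2) hn by linarith
  next
    case False
    then have s1: "s = 2*h+1" using hs by simp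
    then have od: "odd s" by simp
    have "card {u. {y,u} \<in> E - R} = n - h" "p = h + 1" "e p = 1" using A C eq e1 p(2) s1 hn by linarith+
    then have "{u. {y,u} \<in> E - R} = \<sigma> ` {h+1..n}"
      using card_subset_eq[OF fin NB_Y[OF y]] cs by simp
    then have "\<sigma> ` {h+1..n} \<subseteq> nbhd E y" using NB_sub_nbhd by blast
    then show False using codd[OF od] \<open>p = h + 1\<close> \<open>e p = 1\<close> y by blast
  qed
qed

end

context colconf begin

lemma ends: assumes "{a,b} \<in> E"
  shows "(a \<in> X \<and> b \<in> X) \<or> (a \<in> X \<and> b \<in> Y) \<or> (a \<in> Y \<and> b \<in> X)"
  using edge[OF assms] edge_notYY[OF assms] Ydef by blast

lemma LI_R: "locally_irregular R"
  unfolding locally_irregular_def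
proof (intro allI impI)
  fix a b assume ab: "{a,b} \<in> R"
  have E: "{a,b} \<in> E" and c: "col a b" using R_iff ab by auto
  have ba: "{b,a} \<in> R" using ab by (simp add: insert_commute)
  have neq: "a \<noteq> b" using edge[OF E] by auto
  have dg: "\<And>x. deg R x = card {u. {x,u} \<in> R}" using deg_alt[OF R_sub G] by blast
  have "card {u. {a,u} \<in> R} \<noteq> card {u. {b,u} \<in> R}"
  proof -
    consider "a \<in> X \<and> b \<in> X" | "a \<in> X \<and> b \<in> Y" | "a \<in> Y \<and> b \<in> X" using ends[OF E] by blast
    then show "card {u. {a,u} \<in> R} \<noteq> card {u. {b,u} \<in> R}"
    proof cases
      case 1
      define p where "p = pos a"
      define q where "q = pos b"
      have pq: "p \<in> {1..n}" "q \<in> {1..n}" using pos_in 1 p_def q_def by auto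
      have ap: "a = \<sigma> p" "b = \<sigma> q" using sig_pos 1 p_def q_def by auto
      have pq1: "p \<noteq> q" using neq ap by auto
      have pq2: "p + q \<le> s" using c 1 unfolding col_def p_def q_def by auto
      show ?thesis
        by (rule arith_red[where h=h and ea="e p" and eb="e q"])
          (use pq1 pq2 pq hdef mono1 codd card_NR_X[OF pq(1)] card_NR_X[OF pq(2)] ap in auto)
    next
      case 2
      define p where "p = pos a"
      have p: "p \<in> {1..n}" "a = \<sigma> p" using pos_in sig_pos 2 p_def by auto
      have "p \<le> h" using c 2 Ydef unfolding col_def p_def by auto
      then show ?thesis using redXY[of p b] p 2 E by auto
    next
      case 3
      define p where "p = pos b"
      have p: "p \<in> {1..n}" "b = \<sigma> p" using pos_in sig_pos 3 p_def by auto
      have "p \<le> h" using c 3 Ydef unfolding col_def p_def by auto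
      then show ?thesis using redXY[of p a] p 3 E by (auto simp: insert_commute)
    qed
  qed
  then show "deg R a \<noteq> deg R b" using dg by simp
qed

lemma LI_B: "locally_irregular (E - R)"
  unfolding locally_irregular_def
proof (intro allI impI)
  fix a b assume ab: "{a,b} \<in> E - R"
  have E: "{a,b} \<in> E" and c: "\<not> col a b" using R_iff ab by auto
  have neq: "a \<noteq> b" using edge[OF E] by auto
  have dg: "\<And>x. deg (E - R) x = card {u. {x,u} \<in> E - R}" using deg_alt[of "E - R" E V] G by blast
  have "card {u. {a,u} \<in> E - R} \<noteq> card {u. {b,u} \<in> E - R}"
  proof -
    consider "a \<in> X \<and> b \<in> X" | "a \<in> X \<and> b \<in> Y" | "a \<in> Y \<and> b \<in> X" using ends[OF E] by blast
    then show "card {u. {a,u} \<in> E - R} \<noteq> card {u. {b,u} \<in> E - R}"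
    proof cases
      case 1
      define p where "p = pos a"
      define q where "q = pos b"
      have pq: "p \<in> {1..n}" "q \<in> {1..n}" using pos_in 1 p_def q_def by auto
      have ap: "a = \<sigma> p" "b = \<sigma> q" using sig_pos 1 p_def q_def by auto
      have pq1: "p \<noteq> q" using neq ap by auto
      have pq2: "p + q > s" using c 1 unfolding col_def p_def q_def by auto
      show ?thesis
        by (rule arith_blue[where h=h and ea="e p" and eb="e q" and n=n])
          (use pq1 pq2 pq hdef mono2 ceven card_NB_X[OF pq(1)] card_NB_X[OF pq(2)] ap in auto)
    next
      case 2
      define p where "p = pos a"
      have p: "p \<in> {1..n}" "a = \<sigma> p" using pos_in sig_pos 2 p_def by auto
      have "p > h" using c 2 Ydef unfolding col_def p_def by auto
      then show ?thesis using blueXY[of p b] p 2 E by auto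
    next
      case 3
      define p where "p = pos b"
      have p: "p \<in> {1..n}" "b = \<sigma> p" using pos_in sig_pos 3 p_def by auto
      have "p > h" using c 3 Ydef unfolding col_def p_def by auto
      then show ?thesis using blueXY[of p a] p 3 E by (auto simp: insert_commute)
    qed
  qed
  then show "deg (E - R) a \<noteq> deg (E - R) b" using dg by simp
qed

lemma result: "\<exists>R. R \<subseteq> E \<and> locally_irregular R \<and> locally_irregular (E - R)"
  using LI_R LI_B R_sub by blast

end

lemma mid:
  fixes V :: "'a set" and E :: "'a set set" and X Y :: "'a set"
    and u :: "nat \<Rightarrow> 'a" and n s h :: nat and f :: "nat \<Rightarrow> nat"
  assumes G: "graph V E" and XV: "X \<subseteq> V" and cl: "clique E X" and Ydef: "Y = V - X"
    and st: "stable E Y" and bij: "bij_betw u {1..n} X" and n3: "n \<ge> 3"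
    and sn: "s = n \<or> s = n + 1" and hdef: "h = s div 2"
    and fdef: "\<And>i. f i = card (nbhd E (u i) \<inter> Y)"
    and fmono: "\<And>i j. 1 \<le> i \<Longrightarrow> i \<le> j \<Longrightarrow> j \<le> n \<Longrightarrow> f j \<le> f i"
    and c1: "odd s \<Longrightarrow> f h \<ge> 1 \<and> \<not> (f n = 1 \<and> (\<exists>y\<in>Y. u ` {h+1..n} \<subseteq> nbhd E y))"
    and c2: "even s \<Longrightarrow> f n \<ge> 1 \<and> \<not> (f h = 1 \<and> (\<exists>y\<in>Y. u ` {1..h} \<subseteq> nbhd E y))"
  shows "\<exists>R. R \<subseteq> E \<and> locally_irregular R \<and> locally_irregular (E - R)"
proof -
  define \<tau> where "\<tau> p = (if p \<le> h then p else n + h + 1 - p)" for p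
  have hn: "1 \<le> h" "h < n" using hdef sn n3 by auto
  have tin: "\<tau> p \<in> {1..n}" if "p \<in> {1..n}" for p using that hn unfolding \<tau>_def by auto
  have tt: "\<tau> (\<tau> p) = p" if "p \<in> {1..n}" for p using that hn unfolding \<tau>_def by auto
  have tbij: "bij_betw \<tau> {1..n} {1..n}"
    by (rule bij_betw_byWitness[where f'=\<tau>]) (use tin tt in auto)
  define \<sigma> where "\<sigma> = u \<circ> \<tau>"
  have sbij: "bij_betw \<sigma> {1..n} X" unfolding \<sigma>_def using bij_betw_trans[OF tbij bij] .
  have tlow: "\<tau> p = p" if "p \<le> h" for p using that unfolding \<tau>_def by auto
  have thigh: "\<tau> p = n + h + 1 - p" if "p > h" for p using that unfolding \<tau>_def by auto
  have img1: "\<sigma> ` {1..h} = u ` {1..h}" unfolding \<sigma>_def using tlow by (auto simp: image_comp[symmetric])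
  have img2: "u ` {h+1..n} \<subseteq> \<sigma> ` {h+1..n}"
  proof
    fix x assume "x \<in> u ` {h+1..n}"
    then obtain i where i: "i \<in> {h+1..n}" "x = u i" by auto
    have "n + h + 1 - i \<in> {h+1..n}" "\<tau> (n + h + 1 - i) = i" using i thigh[of "n + h + 1 - i"] by auto
    then show "x \<in> \<sigma> ` {h+1..n}" unfolding \<sigma>_def using i by (metis comp_apply image_eqI)
  qed
  have th1: "\<tau> (h+1) = n" using thigh[of "h+1"] by simp
  have "colconf V E X Y \<sigma> n s h (\<lambda>p. f (\<tau> p))"
  proof (unfold_locales)
    show "graph V E" "X \<subseteq> V" "clique E X" "Y = V - X" "stable E Y" "bij_betw \<sigma> {1..n} X" "3 \<le> n"
      "s = n \<or> s = n + 1" "h = s div 2" using assms sbij by auto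
    show "\<And>p. f (\<tau> p) = card (nbhd E (\<sigma> p) \<inter> Y)" unfolding \<sigma>_def using fdef by simp
    show "\<And>p q. 1 \<le> p \<Longrightarrow> p \<le> q \<Longrightarrow> q \<le> h \<Longrightarrow> f (\<tau> q) \<le> f (\<tau> p)"
      using tlow fmono hn by auto
    show "\<And>p q. h < p \<Longrightarrow> p \<le> q \<Longrightarrow> q \<le> n \<Longrightarrow> f (\<tau> p) \<le> f (\<tau> q)"
    proof -
      fix p q assume "h < p" "p \<le> q" "q \<le> n"
      then show "f (\<tau> p) \<le> f (\<tau> q)" using thigh[of p] thigh[of q] fmono[of "n + h + 1 - q" "n + h + 1 - p"]
        by auto
    qed
    show "odd s \<Longrightarrow> 1 \<le> f (\<tau> h) \<and> \<not> (f (\<tau> (h + 1)) = 1 \<and> (\<exists>y\<in>Y. \<sigma> ` {h + 1..n} \<subseteq> nbhd E y))"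
    proof -
      assume od: "odd s"
      have A: "f (\<tau> h) = f h" "f (\<tau> (h+1)) = f n" using tlow[of h] th1 by auto
      have B: "(\<exists>y\<in>Y. \<sigma> ` {h + 1..n} \<subseteq> nbhd E y) \<Longrightarrow> (\<exists>y\<in>Y. u ` {h + 1..n} \<subseteq> nbhd E y)"
        using img2 by (meson subset_trans)
      show "1 \<le> f (\<tau> h) \<and> \<not> (f (\<tau> (h + 1)) = 1 \<and> (\<exists>y\<in>Y. \<sigma> ` {h + 1..n} \<subseteq> nbhd E y))"
        using c1[OF od] A B by auto
    qed
    show "even s \<Longrightarrow> 1 \<le> f (\<tau> (h + 1)) \<and> \<not> (f (\<tau> h) = 1 \<and> (\<exists>y\<in>Y. \<sigma> ` {1..h} \<subseteq> nbhd E y))"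
      using c2 tlow[of h] th1 img1 by auto
  qed
  then show ?thesis by (rule colconf.result)
qed

lemma final_from_R:
  assumes "R \<subseteq> E" "locally_irregular R" "locally_irregular (E - R)"
  shows "decomposable E \<and> chi_irr E \<le> 2"
proof -
  define P where "P = (\<lambda>i::nat. if i = 0 then R else E - R)"
  have lt2: "\<And>i::nat. i < 2 \<longleftrightarrow> i = 0 \<or> i = 1" by auto
  have "li_decomposition E 2 P"
    unfolding li_decomposition_def
  proof (intro conjI allI impI)
    show "(\<Union>i<2. P i) = E" using assms(1) unfolding P_def lessThan_def lt2 by auto
    show "\<And>i j. i < 2 \<Longrightarrow> j < 2 \<Longrightarrow> i \<noteq> j \<Longrightarrow> P i \<inter> P j = {}" unfolding P_def lt2 by auto
    show "\<And>i. i < 2 \<Longrightarrow> locally_irregular (P i)" unfolding P_def lt2 using assms by auto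
  qed
  then show ?thesis unfolding decomposable_def chi_irr_def by (auto intro: Least_le)
qed

theorem lemma2p4:
  fixes V :: "'a set" and E :: "'a set set" and X Y :: "'a set"
    and n :: nat and v :: "nat \<Rightarrow> 'a" and d :: "nat \<Rightarrow> nat"
  assumes "graph V E"
    and "maximal_clique V E X"
    and "Y = V - X"
    and "stable E Y"
    and "bij_betw v {1..n} X"
    and "\<And>i. d i = card (nbhd E (v i) \<inter> Y)"
    and "\<And>i j. 1 \<le> i \<Longrightarrow> i \<le> j \<Longrightarrow> j \<le> n \<Longrightarrow> d i \<ge> d j"
    and "d (n div 2) \<ge> 1"
    and "n \<ge> 3"
  shows "decomposable E \<and> chi_irr E \<le> 2"
proof -
  note G = assms(1) and Ydef = assms(3) and st = assms(4) and bij = assms(5) and ddef = assms(6)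
    and dmono = assms(7) and dm = assms(8) and n3 = assms(9)
  have XV: "X \<subseteq> V" and cl: "clique E X" using assms(2) unfolding maximal_clique_def by auto
  define m where "m = n div 2"
  have m1: "d m \<ge> 1" using dm m_def by simp
  have Xeq: "X = v ` {1..n}" using bij unfolding bij_betw_def by auto
  have noall: False if y: "y \<in> Y" "X \<subseteq> nbhd E y" for y
  proof -
    have yV: "y \<in> V" "y \<notin> X" using y Ydef by auto
    have "clique E (insert y X)"
      unfolding clique_def
    proof (intro ballI impI)
      fix a b assume a: "a \<in> insert y X" and b: "b \<in> insert y X" and ab: "a \<noteq> b"
      show "adj E a b"
      proof (cases "a = y")
        case True
        then have "b \<in> X" using b ab by auto
        then show ?thesis using y True unfolding nbhd_def by auto
      next
        case False
        then have aX: "a \<in> X" using a by auto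
        show ?thesis
        proof (cases "b = y")
          case True
          then have "adj E y a" using y aX unfolding nbhd_def by auto
          then show ?thesis using True unfolding adj_def by (simp add: insert_commute)
        next
          case False
          then show ?thesis using cl aX b ab unfolding clique_def by auto
        qed
      qed
    qed
    moreover have "X \<subset> insert y X" "insert y X \<subseteq> V" using yV XV by auto
    ultimately show False using assms(2) unfolding maximal_clique_def by blast
  qed
  have uniq: "y1 = y2" if "i \<in> {1..n}" "d i = 1" "y1 \<in> Y" "y2 \<in> Y" "v i \<in> nbhd E y1" "v i \<in> nbhd E y2"
    for i y1 y2
  proof -
    have "y1 \<in> nbhd E (v i) \<inter> Y" "y2 \<in> nbhd E (v i) \<inter> Y" using that
      unfolding nbhd_def adj_def by (auto simp: insert_commute)
    moreover have "card (nbhd E (v i) \<inter> Y) = 1" using that(2) ddef[of i] by simp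
    then obtain z where "nbhd E (v i) \<inter> Y = {z}" by (auto simp: card_1_singleton_iff)
    ultimately show ?thesis by auto
  qed
  have key: "\<exists>R. R \<subseteq> E \<and> locally_irregular R \<and> locally_irregular (E - R)"
  proof (cases "even n")
    case False
    have nm: "n = 2*m + 1" using False m_def by presburger
    show ?thesis
    proof (cases "d n = 1 \<and> (\<exists>y\<in>Y. v ` {m+1..n} \<subseteq> nbhd E y)")
      case False
      show ?thesis
        apply (rule mid[OF G XV cl Ydef st bij n3, where s=n and h=m and f=d])
          subgoal by simp
          subgoal using nm by presburger
          subgoal using ddef by (simp only:)
          subgoal by (rule dmono)
          subgoal using False m1 nm by auto
          subgoal using False m1 nm by auto
          done
    next
      case True
      then obtain y1 where y1: "y1 \<in> Y" "v ` {m+1..n} \<subseteq> nbhd E y1" and dn: "d n = 1" by auto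
      have c2: "\<not> (d (m+1) = 1 \<and> (\<exists>y\<in>Y. v ` {1..m+1} \<subseteq> nbhd E y))"
      proof
        assume "d (m+1) = 1 \<and> (\<exists>y\<in>Y. v ` {1..m+1} \<subseteq> nbhd E y)"
        then obtain y2 where y2: "y2 \<in> Y" "v ` {1..m+1} \<subseteq> nbhd E y2" and dm1: "d (m+1) = 1" by auto
        have "m + 1 \<in> {1..n}" using nm by auto
        moreover have "v (m+1) \<in> nbhd E y1" "v (m+1) \<in> nbhd E y2" using y1 y2 nm by auto
        ultimately have "y1 = y2" using uniq dm1 y1 y2 by blast
        moreover have "{1..n} = {1..m+1} \<union> {m+1..n}" using nm by auto
        ultimately have "X \<subseteq> nbhd E y1" using Xeq y1 y2 by auto
        then show False using noall y1 by blast
      qed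
      show ?thesis
        apply (rule mid[OF G XV cl Ydef st bij n3, where s="n+1" and h="m+1" and f=d])
          subgoal by simp
          subgoal using nm by presburger
          subgoal using ddef by (simp only:)
          subgoal by (rule dmono)
          subgoal using c2 dn nm by auto
          subgoal using c2 dn nm by auto
          done
    qed
  next
    case True
    have nm: "n = 2*m" using True m_def by presburger
    have m2: "m \<ge> 2" using nm n3 by auto
    show ?thesis
    proof (cases "d n = 1 \<and> (\<exists>y\<in>Y. v ` {m+1..n} \<subseteq> nbhd E y)")
      case False
      show ?thesis
        apply (rule mid[OF G XV cl Ydef st bij n3, where s="n+1" and h=m and f=d])
          subgoal by simp
          subgoal using nm by presburger
          subgoal using ddef by (simp only:)
          subgoal by (rule dmono)
          subgoal using False m1 nm by auto
          subgoal using False m1 nm by auto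
          done
    next
      case True
      then obtain y1 where y1: "y1 \<in> Y" "v ` {m+1..n} \<subseteq> nbhd E y1" and dn: "d n = 1" by auto
      show ?thesis
      proof (cases "d m = 1 \<and> (\<exists>y\<in>Y. v ` {1..m} \<subseteq> nbhd E y)")
        case False
        show ?thesis
          apply (rule mid[OF G XV cl Ydef st bij n3, where s=n and h=m and f=d])
          subgoal by simp
          subgoal using nm by presburger
          subgoal using ddef by (simp only:)
          subgoal by (rule dmono)
          subgoal using False dn nm by auto
          subgoal using False dn nm by auto
          done
      next
        case True
        then obtain y2 where y2: "y2 \<in> Y" "v ` {1..m} \<subseteq> nbhd E y2" and dmm: "d m = 1" by auto
        have "d (m+1) \<le> d m" by (rule dmono) (use nm m2 in auto)
        moreover have "d n \<le> d (m+1)" by (rule dmono) (use nm m2 in auto)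
        ultimately have dm1: "d (m+1) = 1" using dmm dn by linarith
        define t where "t i = (if i = m then m+1 else if i = m+1 then m else i)" for i
        have tin: "t i \<in> {1..n}" if "i \<in> {1..n}" for i using that nm m2 unfolding t_def by auto
        have tt: "t (t i) = i" for i unfolding t_def by auto
        have tbij: "bij_betw t {1..n} {1..n}"
          by (rule bij_betw_byWitness[where f'=t]) (use tin tt in auto)
        define u where "u = v \<circ> t"
        have ubij: "bij_betw u {1..n} X" unfolding u_def using bij_betw_trans[OF tbij bij] .
        have dt: "d (t i) = d i" for i unfolding t_def using dmm dm1 by auto
        have udef: "\<And>i. d i = card (nbhd E (u i) \<inter> Y)" unfolding u_def using ddef dt by (metis comp_apply)
        have c1: "\<not> (d n = 1 \<and> (\<exists>y\<in>Y. u ` {m+1..n} \<subseteq> nbhd E y))"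
        proof
          assume "d n = 1 \<and> (\<exists>y\<in>Y. u ` {m+1..n} \<subseteq> nbhd E y)"
          then obtain y3 where y3: "y3 \<in> Y" "u ` {m+1..n} \<subseteq> nbhd E y3" by auto
          have "u (m+1) = v m" "u n = v n" unfolding u_def t_def using nm m2 by auto
          moreover have "m+1 \<in> {m+1..n}" "n \<in> {m+1..n}" using nm m2 by auto
          ultimately have "v m \<in> nbhd E y3" "v n \<in> nbhd E y3" using y3 by (metis image_eqI subsetD)+
          moreover have "v m \<in> nbhd E y2" "v n \<in> nbhd E y1" using y1 y2 nm m2 by auto
          moreover have "m \<in> {1..n}" "n \<in> {1..n}" using nm m2 by auto
          ultimately have "y3 = y2" "y3 = y1" using uniq dmm dn y1 y2 y3 by blast+
          moreover have "{1..n} = {1..m} \<union> {m+1..n}" using nm by auto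
          ultimately have "X \<subseteq> nbhd E y1" using Xeq y1 y2 by auto
          then show False using noall y1 by blast
        qed
        show ?thesis
          apply (rule mid[OF G XV cl Ydef st ubij n3, where s="n+1" and h=m and f=d])
          subgoal by simp
          subgoal using nm by presburger
          subgoal using udef by (simp only:)
          subgoal by (rule dmono)
          subgoal using c1 m1 nm by auto
          subgoal using c1 m1 nm by auto
          done
      qed
    qed
  qed
  then show ?thesis using final_from_R by blast
qed

end
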